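(* Let $m+n\ge 3$ and let $\psi:\mathfrak{stl}(m,n,\mathcal A)\to\mathfrak{sl}(m,n,\mathcal A)$ be the homomorphism with $\psi(v_{ij}(a))=E_{ij}(a)$. Then $\operatorname{Ker}\psi\subseteq H$.
   Context: Standing assumptions: $K$ is a field with $\operatorname{char}K\ne 2,3$, and $\mathcal A$ is an associative unital $K$-algebra. For $1\le i,j\le m+n$ put $\tau_{ij}=0$ if $i,j\le m$ or $i,j\ge m+1$, and $\tau_{ij}=1$ otherwise. A Leibniz superalgebra is a $\mathbb Z_2$-graded $K$-space with a bilinear bracket respecting the grading and satisfying $[[a,b],c]=[a,[b,c]]-(-1)^{|a||b|}[b,[a,c]]$. $\mathfrak{gl}(m,n,\mathcal A)$: $(m+n)\times(m+n)$ matrices over $\mathcal A$, matrix unit $E_{ij}(a)$ of degree $\tau_{ij}$, bracket $[X,Y]=XY-(-1)^{\alpha\beta}YX$. $\mathfrak{sl}(m,n,\mathcal A)$ is the subsuperalgebra generated by the $E_{ij}(a)$, $i\ne j$. $\mathfrak{stl}(m,n,\mathcal A)$ is the Leibniz superalgebra generated by $v_{ij}(a)$, $1\le i\ne j\le m+n$, $a\in\mathcal A$, of degree $\tau_{ij}$, subject to: (1) $K$-linearity in $a$; (2) $[v_{ij}(a),v_{kl}(b)]=0$ if $i\ne l$, $j\ne k$; (3) $[v_{ij}(a),v_{kl}(b)]=v_{il}(ab)$ if $i\ne l$, $j=k$; (4) $[v_{ij}(a),v_{kl}(b)]=-(-1)^{\tau_{ij}\tau_{kl}}v_{kj}(ba)$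 if $i=l$, $j\ne k$. For $i\ne j$, $H_{ij}(a,b)=[v_{ij}(a),v_{ji}(b)]$, and $H$ is the $K$-span of all $H_{ij}(a,b)$. *)

theory Defs
  imports Main "HOL.Vector_Spaces"
begin

text \<open>Parity of the matrix unit position (i,j) in gl(m,n,A):
  0 if both indices are \<le> m or both are \<ge> m+1, and 1 otherwise.\<close>
definition tau :: "nat \<Rightarrow> nat \<Rightarrow> nat \<Rightarrow> nat" where
  "tau m i j = (if (i \<le> m) = (j \<le> m) then 0 else 1)"

datatype ('k, 'a) lterm =
    Gen nat nat 'a
  | Zero
  | Add "('k, 'a) lterm" "('k, 'a) lterm"
  | Smul 'k "('k, 'a) lterm"
  | Br "('k, 'a) lterm" "('k, 'a) lterm"

definition valid_idx :: "nat \<Rightarrow> nat \<Rightarrow> nat \<Rightarrow> nat \<Rightarrow> bool" where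
  "valid_idx m n i j \<longleftrightarrow> 1 \<le> i \<and> i \<le> m + n \<and> 1 \<le> j \<and> j \<le> m + n \<and> i \<noteq> j"

fun wf_term :: "nat \<Rightarrow> nat \<Rightarrow> ('k, 'a) lterm \<Rightarrow> bool" where
  "wf_term m n (Gen i j a) = valid_idx m n i j"
| "wf_term m n Zero = True"
| "wf_term m n (Add x y) = (wf_term m n x \<and> wf_term m n y)"
| "wf_term m n (Smul c x) = wf_term m n x"
| "wf_term m n (Br x y) = (wf_term m n x \<and> wf_term m n y)"

fun monomial :: "('k, 'a) lterm \<Rightarrow> bool" where
  "monomial (Gen i j a) = True"
| "monomial (Br x y) = (monomial x \<and> monomial y)"
| "monomial _ = False"

fun deg :: "nat \<Rightarrow> ('k, 'a) lterm \<Rightarrow> nat" where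
  "deg m (Gen i j a) = tau m i j"
| "deg m (Br x y) = (deg m x + deg m y) mod 2"
| "deg m _ = 0"

text \<open>The defining congruence of stl(m,n,A): the smallest congruence making the term
  algebra a K-vector space with a bilinear bracket satisfying the graded Leibniz identity
  (imposed on homogeneous monomials, which suffices by trilinearity) and the relations
  (1)-(4).  stl(m,n,A) is the quotient of the terms by this congruence.\<close>
inductive stl_eq :: "nat \<Rightarrow> nat \<Rightarrow> ('k \<Rightarrow> 'a \<Rightarrow> 'a) \<Rightarrow>
    ('k::field, 'a::ring_1) lterm \<Rightarrow> ('k, 'a) lterm \<Rightarrow> bool"
  for m n :: nat and smult :: "'k \<Rightarrow> 'a \<Rightarrow> 'a" where
  refl: "stl_eq m n smult x x"
| sym: "stl_eq m n smult x y \<Longrightarrow> stl_eq m n smult y x"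
| trans: "stl_eq m n smult x y \<Longrightarrow> stl_eq m n smult y z \<Longrightarrow> stl_eq m n smult x z"
| cong_add: "stl_eq m n smult x x' \<Longrightarrow> stl_eq m n smult y y' \<Longrightarrow>
     stl_eq m n smult (Add x y) (Add x' y')"
| cong_smul: "stl_eq m n smult x x' \<Longrightarrow> stl_eq m n smult (Smul c x) (Smul c x')"
| cong_br: "stl_eq m n smult x x' \<Longrightarrow> stl_eq m n smult y y' \<Longrightarrow>
     stl_eq m n smult (Br x y) (Br x' y')"
| add_assoc: "stl_eq m n smult (Add (Add x y) z) (Add x (Add y z))"
| add_comm: "stl_eq m n smult (Add x y) (Add y x)"
| add_zero: "stl_eq m n smult (Add x Zero) x"
| add_neg: "stl_eq m n smult (Add x (Smul (-1) x)) Zero"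
| smul_add: "stl_eq m n smult (Smul c (Add x y)) (Add (Smul c x) (Smul c y))"
| add_smul: "stl_eq m n smult (Smul (c + d) x) (Add (Smul c x) (Smul d x))"
| smul_smul: "stl_eq m n smult (Smul c (Smul d x)) (Smul (c * d) x)"
| smul_one: "stl_eq m n smult (Smul 1 x) x"
| br_add_left: "stl_eq m n smult (Br (Add x y) z) (Add (Br x z) (Br y z))"
| br_add_right: "stl_eq m n smult (Br x (Add y z)) (Add (Br x y) (Br x z))"
| br_smul_left: "stl_eq m n smult (Br (Smul c x) y) (Smul c (Br x y))"
| br_smul_right: "stl_eq m n smult (Br x (Smul c y)) (Smul c (Br x y))"
| leibniz: "monomial a \<Longrightarrow> monomial b \<Longrightarrow> monomial c \<Longrightarrow>
     stl_eq m n smult (Br (Br a b) c)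
       (Add (Br a (Br b c)) (Smul (- ((-1) ^ (deg m a * deg m b))) (Br b (Br a c))))"
| rel1_add: "valid_idx m n i j \<Longrightarrow>
     stl_eq m n smult (Gen i j (a + b)) (Add (Gen i j a) (Gen i j b))"
| rel1_smul: "valid_idx m n i j \<Longrightarrow>
     stl_eq m n smult (Gen i j (smult c a)) (Smul c (Gen i j a))"
| rel2: "valid_idx m n i j \<Longrightarrow> valid_idx m n k l \<Longrightarrow> i \<noteq> l \<Longrightarrow> j \<noteq> k \<Longrightarrow>
     stl_eq m n smult (Br (Gen i j a) (Gen k l b)) Zero"
| rel3: "valid_idx m n i j \<Longrightarrow> valid_idx m n k l \<Longrightarrow> i \<noteq> l \<Longrightarrow> j = k \<Longrightarrow>
     stl_eq m n smult (Br (Gen i j a) (Gen k l b)) (Gen i l (a * b))"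
| rel4: "valid_idx m n i j \<Longrightarrow> valid_idx m n k l \<Longrightarrow> i = l \<Longrightarrow> j \<noteq> k \<Longrightarrow>
     stl_eq m n smult (Br (Gen i j a) (Gen k l b))
       (Smul (- ((-1) ^ (tau m i j * tau m k l))) (Gen k j (b * a)))"

text \<open>Matrices in gl(m,n,A): entries indexed by 1..m+n (functions nat \<Rightarrow> nat \<Rightarrow> 'a).
  Super bracket, extended bilinearly from homogeneous matrices:
  [X,Y]_{ik} = \<Sum>_j X_ij Y_jk - (-1)^{tau(j,k) tau(i,j)} Y_ij X_jk.\<close>
definition sbr :: "nat \<Rightarrow> nat \<Rightarrow> (nat \<Rightarrow> nat \<Rightarrow> 'a::ring_1) \<Rightarrow> (nat \<Rightarrow> nat \<Rightarrow> 'a)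
    \<Rightarrow> nat \<Rightarrow> nat \<Rightarrow> 'a" where
  "sbr m n X Y = (\<lambda>i k. \<Sum>j\<in>{1..m+n}.
      X i j * Y j k - (-1) ^ (tau m j k * tau m i j) * (Y i j * X j k))"

definition unit_mat :: "nat \<Rightarrow> nat \<Rightarrow> 'a::zero \<Rightarrow> nat \<Rightarrow> nat \<Rightarrow> 'a" where
  "unit_mat i j a = (\<lambda>p q. if p = i \<and> q = j then a else 0)"

fun psi :: "nat \<Rightarrow> nat \<Rightarrow> ('k \<Rightarrow> 'a \<Rightarrow> 'a) \<Rightarrow> ('k, 'a::ring_1) lterm \<Rightarrow> nat \<Rightarrow> nat \<Rightarrow> 'a" where
  "psi m n smult (Gen i j a) = unit_mat i j a"
| "psi m n smult Zero = (\<lambda>p q. 0)"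
| "psi m n smult (Add x y) = (\<lambda>p q. psi m n smult x p q + psi m n smult y p q)"
| "psi m n smult (Smul c x) = (\<lambda>p q. smult c (psi m n smult x p q))"
| "psi m n smult (Br x y) = sbr m n (psi m n smult x) (psi m n smult y)"

inductive_set Hspan :: "nat \<Rightarrow> nat \<Rightarrow> ('k, 'a) lterm set" for m n :: nat where
  H_gen: "valid_idx m n i j \<Longrightarrow> Br (Gen i j a) (Gen j i b) \<in> Hspan m n"
| H_zero: "Zero \<in> Hspan m n"
| H_add: "x \<in> Hspan m n \<Longrightarrow> y \<in> Hspan m n \<Longrightarrow> Add x y \<in> Hspan m n"
| H_smul: "x \<in> Hspan m n \<Longrightarrow> Smul c x \<in> Hspan m n"

definition Kalgebra :: "('k::field \<Rightarrow> 'a::ring_1 \<Rightarrow> 'a) \<Rightarrow> bool" where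
  "Kalgebra smult \<longleftrightarrow> module smult \<and>
     (\<forall>c x y. smult c (x * y) = smult c x * y \<and> smult c (x * y) = x * smult c y)"

end

theory Submission
  imports Defs
begin


lemma tau_le: "tau m i j \<le> 1"
  by (simp add: tau_def)

lemma tau_trans: "tau m i k = (tau m i j + tau m j k) mod 2"
  by (simp add: tau_def)

definition mm :: "nat \<Rightarrow> (nat \<Rightarrow> nat \<Rightarrow> 'a::ring_1) \<Rightarrow> (nat \<Rightarrow> nat \<Rightarrow> 'a) \<Rightarrow> nat \<Rightarrow> nat \<Rightarrow> 'a" where
  "mm N X Y = (\<lambda>i k. \<Sum>j\<in>{1..N}. X i j * Y j k)"

definition homog :: "nat \<Rightarrow> nat \<Rightarrow> (nat \<Rightarrow> nat \<Rightarrow> 'a::zero) \<Rightarrow> bool" where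
  "homog m d X \<longleftrightarrow> (\<forall>i j. X i j \<noteq> 0 \<longrightarrow> tau m i j = d)"

lemma neg1_pow_comm: "x * (-1::'a::ring_1)^e = (-1)^e * x"
  by (cases "even e") auto

lemma sbr_homog:
  assumes "homog m \<alpha> X" "homog m \<beta> Y"
  shows "sbr m n X Y = (\<lambda>i k. mm (m+n) X Y i k - (-1)^(\<alpha>*\<beta>) * mm (m+n) Y X i k)"
proof (intro ext)
  fix i k
  have "\<And>j. (-1)^(tau m j k * tau m i j) * (Y i j * X j k) = (-1)^(\<alpha>*\<beta>) * (Y i j * X j k)"
  proof -
    fix j
    show "(-1)^(tau m j k * tau m i j) * (Y i j * X j k) = (-1)^(\<alpha>*\<beta>) * (Y i j * X j k)"
    proof (cases "Y i j = 0 \<or> X j k = 0")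
      case True then show ?thesis by auto
    next
      case False
      then have "tau m i j = \<beta>" "tau m j k = \<alpha>" using assms unfolding homog_def by auto
      then show ?thesis by (simp add: mult.commute)
    qed
  qed
  then show "sbr m n X Y i k = mm (m+n) X Y i k - (-1)^(\<alpha>*\<beta>) * mm (m+n) Y X i k"
    unfolding sbr_def mm_def by (simp add: sum_subtractf sum_distrib_left)
qed

lemma homog_mm:
  assumes "homog m \<alpha> X" "homog m \<beta> Y"
  shows "homog m ((\<alpha>+\<beta>) mod 2) (mm N X Y)"
  unfolding homog_def
proof (intro allI impI)
  fix i k assume "mm N X Y i k \<noteq> 0"
  then obtain j where "X i j * Y j k \<noteq> 0" unfolding mm_def
    by (meson sum.neutral)
  then have "X i j \<noteq> 0" "Y j k \<noteq> 0" by auto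
  then have "tau m i j = \<alpha>" "tau m j k = \<beta>" using assms unfolding homog_def by auto
  then show "tau m i k = (\<alpha>+\<beta>) mod 2" using tau_trans[of m i k j] by simp
qed

lemma homog_sbr:
  assumes "homog m \<alpha> X" "homog m \<beta> Y"
  shows "homog m ((\<alpha>+\<beta>) mod 2) (sbr m n X Y)"
proof -
  have a: "homog m ((\<alpha>+\<beta>) mod 2) (mm (m+n) X Y)" using homog_mm assms by blast
  have b: "homog m ((\<alpha>+\<beta>) mod 2) (mm (m+n) Y X)" using homog_mm[OF assms(2,1)] by (simp add: add.commute)
  show ?thesis unfolding sbr_homog[OF assms] homog_def
  proof (intro allI impI)
    fix i k assume "mm (m + n) X Y i k - (- 1) ^ (\<alpha> * \<beta>) * mm (m + n) Y X i k \<noteq> 0"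
    then have "mm (m + n) X Y i k \<noteq> 0 \<or> mm (m + n) Y X i k \<noteq> 0" by auto
    then show "tau m i k = (\<alpha>+\<beta>) mod 2" using a b unfolding homog_def by blast
  qed
qed

lemma mm_assoc: "mm N (mm N X Y) Z = mm N X (mm N Y Z)"
  unfolding mm_def
  by (auto intro!: ext simp: sum_distrib_left sum_distrib_right mult.assoc intro: sum.swap)

lemma mm_diff_l: "mm N (\<lambda>i k. A i k - c * B i k) C = (\<lambda>i k. mm N A C i k - c * mm N B C i k)"
  unfolding mm_def by (auto intro!: ext simp: sum_subtractf sum_distrib_left algebra_simps)

lemma neg1_pow_comm2: "a * ((-1::'a::ring_1)^e * c) = (-1)^e * (a * c)"
  by (metis mult.assoc neg1_pow_comm)

lemma mm_diff_r: "mm N A (\<lambda>i k. B i k - (-1)^e * C i k) = (\<lambda>i k. mm N A B i k - (-1)^e * mm N A C i k)"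
  unfolding mm_def by (auto intro!: ext simp: sum_subtractf sum_distrib_left right_diff_distrib neg1_pow_comm2)

lemma sbr_leib:
  assumes X: "homog m a X" and Y: "homog m b Y" and Z: "homog m c Z"
    and abc: "a \<le> 1" "b \<le> 1" "c \<le> 1"
  shows "sbr m n (sbr m n X Y) Z = (\<lambda>p q. sbr m n X (sbr m n Y Z) p q
     + (- ((-1)^(a*b))) * sbr m n Y (sbr m n X Z) p q)"
proof -
  let ?N = "m+n"
  have hXY: "homog m ((a+b) mod 2) (sbr m n X Y)" using homog_sbr X Y by blast
  have hYZ: "homog m ((b+c) mod 2) (sbr m n Y Z)" using homog_sbr Y Z by blast
  have hXZ: "homog m ((a+c) mod 2) (sbr m n X Z)" using homog_sbr X Z by blast
  note e = sbr_homog[OF hXY Z] sbr_homog[OF X hYZ] sbr_homog[OF Y hXZ]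
     sbr_homog[OF X Y] sbr_homog[OF Y Z] sbr_homog[OF X Z]
  show ?thesis
    unfolding e(1-3) unfolding e(4-6) mm_diff_l mm_diff_r mm_assoc
    using abc
    by (cases a; cases b; cases c) (auto intro!: ext simp: algebra_simps)
qed
 

lemma deg_le: "deg m a \<le> 1"
  by (induction a) (auto simp: tau_def)

lemma psi_homog: "monomial a \<Longrightarrow> homog m (deg m a) (psi m n smult a)"
proof (induction a)
  case (Gen i j a) then show ?case by (simp add: homog_def unit_mat_def)
next
  case (Br x y) then show ?case using homog_sbr by simp
qed auto

lemma unit_sbr:
  "sbr m n (unit_mat i j a) (unit_mat k l b) = (\<lambda>p q.
     (if p = i \<and> q = l \<and> j = k \<and> 1 \<le> j \<and> j \<le> m+n then a*b else 0)
   - (if p = k \<and> q = j \<and> l = i \<and> 1 \<le> i \<and> i \<le> m+n then (-1)^(tau m i j * tau m k l) * (b*a) else 0))"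
proof (intro ext)
  fix p q
  have 1: "(\<Sum>r\<in>{1..m+n}. unit_mat i j a p r * unit_mat k l b r q)
     = (\<Sum>r\<in>{1..m+n}. if r = j then (if p = i \<and> q = l \<and> j = k then a*b else 0) else 0)"
    by (rule sum.cong) (auto simp: unit_mat_def)
  have 2: "(\<Sum>r\<in>{1..m+n}. (-1)^(tau m r q * tau m p r) * (unit_mat k l b p r * unit_mat i j a r q))
     = (\<Sum>r\<in>{1..m+n}. if r = i then (if p = k \<and> q = j \<and> l = i then (-1)^(tau m i j * tau m k l) * (b*a) else 0) else 0)"
    by (rule sum.cong) (auto simp: unit_mat_def mult.commute)
  show "sbr m n (unit_mat i j a) (unit_mat k l b) p q = 
     (if p = i \<and> q = l \<and> j = k \<and> 1 \<le> j \<and> j \<le> m+n then a*b else 0)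
   - (if p = k \<and> q = j \<and> l = i \<and> 1 \<le> i \<and> i \<le> m+n then (-1)^(tau m i j * tau m k l) * (b*a) else 0)"
    unfolding sbr_def sum_subtractf 1 2 by (simp add: sum.delta)
qed

lemma Kalg_module: "Kalgebra smult \<Longrightarrow> module smult"
  by (simp add: Kalgebra_def)

lemma smult_sign: "Kalgebra smult \<Longrightarrow> smult ((-1)^e) w = (-1)^e * w"
proof (induction e arbitrary: w)
  case 0 then show ?case using module.scale_one[OF Kalg_module] by simp
next
  case (Suc e)
  have "smult ((-1)^Suc e) w = smult (-1) (smult ((-1)^e) w)"
    using module.scale_scale[OF Kalg_module[OF Suc.prems]] by simp
  also have "\<dots> = - ((-1)^e * w)" using Suc module.scale_minus_left[OF Kalg_module[OF Suc.prems]]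
    module.scale_one[OF Kalg_module[OF Suc.prems]] by (metis)
  finally show ?case by simp
qed

lemma psi_inv:
  assumes alg: "Kalgebra smult"
  shows "stl_eq m n smult x y \<Longrightarrow> psi m n smult x = psi m n smult y"
proof (induction rule: stl_eq.induct)
  interpret M: module smult using Kalg_module[OF alg] .
  have l1: "\<And>c x y. smult c x * y = smult c (x * y)" using alg unfolding Kalgebra_def by metis
  have l2: "\<And>c x y. x * smult c y = smult c (x * y)" using alg unfolding Kalgebra_def by metis
  {
    case (add_assoc x y z) then show ?case by (auto simp: add.assoc)
  next
    case (add_comm x y) then show ?case by (auto simp: add.commute)
  next
    case (add_zero x) then show ?case by auto
  next
    case (add_neg x) then show ?case by auto
  next
    case (smul_add c x y) then show ?case by (auto simp: M.scale_right_distrib)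
  next
    case (add_smul c d x) then show ?case by (auto simp: M.scale_left_distrib)
  next
    case (smul_smul c d x) then show ?case by auto
  next
    case (smul_one x) then show ?case by auto
  next
    case (br_add_left x y z) then show ?case
      by (auto intro!: ext simp: sbr_def sum.distrib[symmetric] algebra_simps)
  next
    case (br_add_right x y z) then show ?case
      by (auto intro!: ext simp: sbr_def sum.distrib[symmetric] algebra_simps)
  next
    case (br_smul_left c x y) then show ?case
      by (auto intro!: ext simp: sbr_def M.scale_sum_right M.scale_right_diff_distrib l1 l2)
  next
    case (br_smul_right c x y) then show ?case
      by (auto intro!: ext simp: sbr_def M.scale_sum_right M.scale_right_diff_distrib l1 l2)
  next
    case (leibniz a b c)
    show ?case
      using sbr_leib[OF psi_homog[OF leibniz(1)] psi_homog[OF leibniz(2)] psi_homog[OF leibniz(3)] deg_le deg_le deg_le]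
      by (simp add: smult_sign[OF alg])
  next
    case (rel1_add i j a b) then show ?case by (auto intro!: ext simp: unit_mat_def)
  next
    case (rel1_smul i j c a) then show ?case by (auto intro!: ext simp: unit_mat_def)
  next
    case (rel2 i j k l a b) then show ?case by (auto intro!: ext simp: unit_sbr)
  next
    case (rel3 i j k l a b) then show ?case by (simp add: unit_sbr) (auto intro!: ext simp: unit_mat_def valid_idx_def)
  next
    case (rel4 i j k l a b) then show ?case 
      by (simp add: unit_sbr) (auto intro!: ext simp: unit_mat_def valid_idx_def smult_sign[OF alg])
  }
qed auto



inductive_set NF :: "nat \<Rightarrow> nat \<Rightarrow> ('k, 'a) lterm set" for m n :: nat where
  nf_gen: "valid_idx m n i j \<Longrightarrow> Gen i j a \<in> NF m n"
| nf_h: "valid_idx m n i j \<Longrightarrow> Br (Gen i j a) (Gen j i b) \<in> NF m n"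
| nf_zero: "Zero \<in> NF m n"
| nf_add: "x \<in> NF m n \<Longrightarrow> y \<in> NF m n \<Longrightarrow> Add x y \<in> NF m n"
| nf_smul: "x \<in> NF m n \<Longrightarrow> Smul c x \<in> NF m n"

inductive_set NF0 :: "nat \<Rightarrow> nat \<Rightarrow> ('k, 'a) lterm set" for m n :: nat where
  nf0_gen: "valid_idx m n i j \<Longrightarrow> Gen i j a \<in> NF0 m n"
| nf0_zero: "Zero \<in> NF0 m n"
| nf0_add: "x \<in> NF0 m n \<Longrightarrow> y \<in> NF0 m n \<Longrightarrow> Add x y \<in> NF0 m n"
| nf0_smul: "x \<in> NF0 m n \<Longrightarrow> Smul c x \<in> NF0 m n"

lemma NF0_NF: "x \<in> NF0 m n \<Longrightarrow> x \<in> NF m n"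
  by (induction rule: NF0.induct) (auto intro: NF.intros)

context
  fixes m n :: nat and smult :: "'k::field \<Rightarrow> 'a::ring_1 \<Rightarrow> 'a"
begin

abbreviation E :: "('k, 'a) lterm \<Rightarrow> ('k, 'a) lterm \<Rightarrow> bool" (infix "\<approx>" 50) where
  "x \<approx> y \<equiv> stl_eq m n smult x y"

lemmas [trans] = stl_eq.trans

definition good :: "('k, 'a) lterm \<Rightarrow> bool" where
  "good z \<longleftrightarrow> (\<exists>w \<in> NF m n. z \<approx> w)"

definition good0 :: "('k, 'a) lterm \<Rightarrow> bool" where
  "good0 z \<longleftrightarrow> (\<exists>w \<in> NF0 m n. z \<approx> w)"

lemma smul0: "Smul 0 v \<approx> Zero"
proof -
  let ?u = "Smul 0 v"
  have "?u \<approx> Add ?u Zero" by (rule stl_eq.sym, rule stl_eq.add_zero)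
  also have "\<dots> \<approx> Add ?u (Add ?u (Smul (-1) ?u))"
    by (rule stl_eq.cong_add, rule stl_eq.refl, rule stl_eq.sym, rule stl_eq.add_neg)
  also have "\<dots> \<approx> Add (Add ?u ?u) (Smul (-1) ?u)"
    by (rule stl_eq.sym, rule stl_eq.add_assoc)
  also have "Add ?u ?u \<approx> Smul (0+0) v" by (rule stl_eq.sym, rule stl_eq.add_smul)
  then have "Add (Add ?u ?u) (Smul (-1) ?u) \<approx> Add ?u (Smul (-1) ?u)"
    by (intro stl_eq.cong_add stl_eq.refl) simp
  also have "\<dots> \<approx> Zero" by (rule stl_eq.add_neg)
  finally show ?thesis .
qed

lemma br_zero_r: "Br x Zero \<approx> Zero"
proof -
  have "Br x Zero \<approx> Br x (Smul 0 Zero)"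
    by (intro stl_eq.cong_br stl_eq.refl stl_eq.sym[OF smul0])
  also have "\<dots> \<approx> Smul 0 (Br x Zero)" by (rule stl_eq.br_smul_right)
  also have "\<dots> \<approx> Zero" by (rule smul0)
  finally show ?thesis .
qed

lemma br_zero_l: "Br Zero x \<approx> Zero"
proof -
  have "Br Zero x \<approx> Br (Smul 0 Zero) x"
    by (intro stl_eq.cong_br stl_eq.refl stl_eq.sym[OF smul0])
  also have "\<dots> \<approx> Smul 0 (Br Zero x)" by (rule stl_eq.br_smul_left)
  also have "\<dots> \<approx> Zero" by (rule smul0)
  finally show ?thesis .
qed

lemma vec1:
  assumes "X \<approx> Add Y (Smul (-c) Z)"
  shows "Y \<approx> Add X (Smul c Z)"
proof -
  have "Add X (Smul c Z) \<approx> Add (Add Y (Smul (-c) Z)) (Smul c Z)"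
    by (intro stl_eq.cong_add stl_eq.refl assms)
  also have "\<dots> \<approx> Add Y (Add (Smul (-c) Z) (Smul c Z))" by (rule stl_eq.add_assoc)
  also have "Add (Smul (-c) Z) (Smul c Z) \<approx> Smul (-c + c) Z" by (rule stl_eq.sym, rule stl_eq.add_smul)
  then have "Add Y (Add (Smul (-c) Z) (Smul c Z)) \<approx> Add Y Zero"
    using smul0 by (intro stl_eq.cong_add stl_eq.refl) (auto intro: stl_eq.trans)
  also have "\<dots> \<approx> Y" by (rule stl_eq.add_zero)
  finally show ?thesis by (rule stl_eq.sym)
qed

lemma good_cong: "z \<approx> z' \<Longrightarrow> good z' \<Longrightarrow> good z"
  unfolding good_def by (auto intro: stl_eq.trans)

lemma good0_cong: "z \<approx> z' \<Longrightarrow> good0 z' \<Longrightarrow> good0 z"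
  unfolding good0_def by (auto intro: stl_eq.trans)

lemma good0_good: "good0 z \<Longrightarrow> good z"
  unfolding good0_def good_def using NF0_NF by blast

lemma good_add: "good x \<Longrightarrow> good y \<Longrightarrow> good (Add x y)"
  unfolding good_def by (auto intro: stl_eq.cong_add NF.intros)

lemma good_smul: "good x \<Longrightarrow> good (Smul c x)"
  unfolding good_def by (auto intro: stl_eq.cong_smul NF.intros)

lemma good_zero: "good Zero"
  unfolding good_def by (auto intro: stl_eq.refl NF.intros)

lemma good0_zero: "good0 Zero"
  unfolding good0_def by (auto intro: stl_eq.refl NF0.intros)

lemma good0_smul: "good0 x \<Longrightarrow> good0 (Smul c x)"
  unfolding good0_def by (auto intro: stl_eq.cong_smul NF0.intros)

lemma good0_gen: "valid_idx m n i j \<Longrightarrow> good0 (Gen i j a)"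
  unfolding good0_def by (auto intro: stl_eq.refl NF0.intros)

lemma good_NF: "x \<in> NF m n \<Longrightarrow> good x"
  unfolding good_def by (auto intro: stl_eq.refl)

lemma good_brL_cong: "x \<approx> x' \<Longrightarrow> good (Br x' y) \<Longrightarrow> good (Br x y)"
  by (erule good_cong[rotated]) (intro stl_eq.cong_br stl_eq.refl)

lemma good_brR_cong: "y \<approx> y' \<Longrightarrow> good (Br x y') \<Longrightarrow> good (Br x y)"
  by (erule good_cong[rotated]) (intro stl_eq.cong_br stl_eq.refl)

lemma good_brL_add: "good (Br x1 y) \<Longrightarrow> good (Br x2 y) \<Longrightarrow> good (Br (Add x1 x2) y)"
  by (rule good_cong[OF stl_eq.br_add_left], rule good_add)

lemma good_brR_add: "good (Br x y1) \<Longrightarrow> good (Br x y2) \<Longrightarrow> good (Br x (Add y1 y2))"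
  by (rule good_cong[OF stl_eq.br_add_right], rule good_add)

lemma good_brL_smul: "good (Br x y) \<Longrightarrow> good (Br (Smul c x) y)"
  by (rule good_cong[OF stl_eq.br_smul_left], rule good_smul)

lemma good_brR_smul: "good (Br x y) \<Longrightarrow> good (Br x (Smul c y))"
  by (rule good_cong[OF stl_eq.br_smul_right], rule good_smul)

lemma good_brL_zero: "good (Br Zero y)"
  by (rule good_cong[OF br_zero_l good_zero])

lemma good_brR_zero: "good (Br x Zero)"
  by (rule good_cong[OF br_zero_r good_zero])

lemma br_right_NF0:
  assumes "y \<in> NF0 m n" and "\<And>i j a. valid_idx m n i j \<Longrightarrow> good (Br x (Gen i j a))"
  shows "good (Br x y)"
  using assms(1) by induction (auto intro: assms(2) good_brR_add good_brR_smul good_brR_zero)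

lemma br_left_NF0:
  assumes "y \<in> NF0 m n" and "\<And>i j a. valid_idx m n i j \<Longrightarrow> good (Br (Gen i j a) x)"
  shows "good (Br y x)"
  using assms(1) by induction (auto intro: assms(2) good_brL_add good_brL_smul good_brL_zero)

lemma br_right_NF:
  assumes "y \<in> NF m n" and "\<And>i j a. valid_idx m n i j \<Longrightarrow> good (Br x (Gen i j a))"
    and "\<And>i j a b. valid_idx m n i j \<Longrightarrow> good (Br x (Br (Gen i j a) (Gen j i b)))"
  shows "good (Br x y)"
  using assms(1) by induction (auto intro: assms(2,3) good_brR_add good_brR_smul good_brR_zero)

lemma br_left_NF:
  assumes "y \<in> NF m n" and "\<And>i j a. valid_idx m n i j \<Longrightarrow> good (Br (Gen i j a) x)"
    and "\<And>i j a b. valid_idx m n i j \<Longrightarrow> good (Br (Br (Gen i j a) (Gen j i b)) x)"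
  shows "good (Br y x)"
  using assms(1) by induction (auto intro: assms(2,3) good_brL_add good_brL_smul good_brL_zero)

lemma GG0:
  assumes "valid_idx m n i j" "valid_idx m n k l" "\<not> (i = l \<and> j = k)"
  shows "good0 (Br (Gen i j a) (Gen k l b))"
proof (cases "i = l")
  case True
  then have "j \<noteq> k" using assms by auto
  have "valid_idx m n k j" using assms True unfolding valid_idx_def by auto
  then show ?thesis using True \<open>j \<noteq> k\<close> assms
    by (intro good0_cong[OF stl_eq.rel4] good0_smul good0_gen) auto
next
  case False
  show ?thesis
  proof (cases "j = k")
    case True
    have "valid_idx m n i l" using assms False unfolding valid_idx_def by auto
    then show ?thesis using True False assms
      by (intro good0_cong[OF stl_eq.rel3] good0_gen) auto
  next
    case False2: False
    then show ?thesis using False assms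
      by (intro good0_cong[OF stl_eq.rel2] good0_zero) auto
  qed
qed

lemma GG:
  assumes "valid_idx m n i j" "valid_idx m n k l"
  shows "good (Br (Gen i j a) (Gen k l b))"
proof (cases "i = l \<and> j = k")
  case True
  then show ?thesis using assms by (auto intro: good_NF NF.intros)
next
  case False
  then show ?thesis using GG0 assms good0_good by blast
qed

lemma A_right:
  assumes "valid_idx m n k l" "y \<in> NF0 m n"
  shows "good (Br (Gen k l c) y)"
  using assms(2) by (rule br_right_NF0) (rule GG[OF assms(1)])

lemma A_left:
  assumes "valid_idx m n k l" "y \<in> NF0 m n"
  shows "good (Br y (Gen k l c))"
  using assms(2) by (rule br_left_NF0) (rule GG[OF _ assms(1)])

lemma good0_br_gen_r:
  assumes "valid_idx m n k l" "good0 y"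
  shows "good (Br (Gen k l c) y)"
  using assms A_right good_brR_cong unfolding good0_def by blast

lemma good0_br_gen_l:
  assumes "valid_idx m n k l" "good0 y"
  shows "good (Br y (Gen k l c))"
  using assms A_left good_brL_cong unfolding good0_def by blast

lemma valid_sym: "valid_idx m n i j \<Longrightarrow> valid_idx m n j i"
  unfolding valid_idx_def by auto

lemma HG_easy:
  assumes v: "valid_idx m n i j" "valid_idx m n k l" and ne: "\<not> (k = i \<and> l = j)" "\<not> (k = j \<and> l = i)"
  shows "good (Br (Br (Gen i j a) (Gen j i b)) (Gen k l c))"
proof -
  have vs: "valid_idx m n j i" using valid_sym v by blast
  note L = stl_eq.leibniz[where a="Gen i j a" and b="Gen j i b" and c="Gen k l c" and m=m and n=n and smult=smult, simplified]
  show ?thesis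
    apply (rule good_cong[OF L])
    using v vs ne by (intro good_add good_smul good0_br_gen_r GG0) auto
qed

lemma Hdec:
  assumes v: "valid_idx m n i j" and p: "1 \<le> p" "p \<le> m + n" "p \<noteq> i" "p \<noteq> j"
  shows "\<exists>c1 c2. Br (Gen i j a) (Gen j i b) \<approx>
     Add (Br (Gen i p a) (Gen p i b)) (Smul c1 (Smul c2 (Br (Gen p j 1) (Gen j p (b*a)))))"
proof -
  have vip: "valid_idx m n i p" and vpj: "valid_idx m n p j" and vpi: "valid_idx m n p i"
    and vjp: "valid_idx m n j p" and vji: "valid_idx m n j i"
    using v p unfolding valid_idx_def by auto
  let ?c1 = "- ((- 1) ^ (deg m (Gen i p a :: ('k,'a) lterm) * deg m (Gen p j 1 :: ('k,'a) lterm))) :: 'k"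
  let ?c2 = "- ((- 1) ^ (tau m i p * tau m j i)) :: 'k"
  have r3: "Br (Gen i p a) (Gen p j 1) \<approx> Gen i j a"
    using stl_eq.rel3[OF vip vpj, where a=a and b=1 and smult=smult] v by (simp add: valid_idx_def)
  have "Br (Gen i j a) (Gen j i b) \<approx> Br (Br (Gen i p a) (Gen p j 1)) (Gen j i b)"
    by (intro stl_eq.cong_br stl_eq.refl stl_eq.sym[OF r3])
  also have "\<dots> \<approx> Add (Br (Gen i p a) (Br (Gen p j 1) (Gen j i b)))
      (Smul ?c1 (Br (Gen p j 1) (Br (Gen i p a) (Gen j i b))))"
    by (rule stl_eq.leibniz) simp_all
  also have "\<dots> \<approx> Add (Br (Gen i p a) (Gen p i b))
      (Smul ?c1 (Br (Gen p j 1) (Smul ?c2 (Gen j p (b*a)))))"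
  proof (intro stl_eq.cong_add stl_eq.cong_smul stl_eq.cong_br stl_eq.refl)
    show "Br (Gen p j 1) (Gen j i b) \<approx> Gen p i b"
      using stl_eq.rel3[OF vpj vji, where a=1 and b=b and smult=smult] p by simp
    show "Br (Gen i p a) (Gen j i b) \<approx> Smul ?c2 (Gen j p (b * a))"
      using stl_eq.rel4[OF vip vji, where a=a and b=b and smult=smult] p by simp
  qed
  also have "\<dots> \<approx> Add (Br (Gen i p a) (Gen p i b))
      (Smul ?c1 (Smul ?c2 (Br (Gen p j 1) (Gen j p (b*a)))))"
    by (intro stl_eq.cong_add stl_eq.cong_smul stl_eq.refl stl_eq.br_smul_right)
  finally show ?thesis by blast
qed

lemma pick_p:
  assumes "m + n \<ge> 3"
  obtains p where "1 \<le> p" "p \<le> m + n" "p \<noteq> i" "p \<noteq> j"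
proof -
  show ?thesis
  proof (cases "1 \<noteq> i \<and> 1 \<noteq> j")
    case True then show ?thesis using assms that[of 1] by auto
  next
    case F1: False
    show ?thesis
    proof (cases "2 \<noteq> i \<and> 2 \<noteq> j")
      case True then show ?thesis using assms that[of 2] by auto
    next
      case False then show ?thesis using F1 assms that[of 3] by auto
    qed
  qed
qed

lemma HG:
  assumes mn: "m + n \<ge> 3" and v: "valid_idx m n i j" "valid_idx m n k l"
  shows "good (Br (Br (Gen i j a) (Gen j i b)) (Gen k l c))"
proof (cases "(k = i \<and> l = j) \<or> (k = j \<and> l = i)")
  case False
  then show ?thesis using HG_easy v by blast
next
  case True
  obtain p where p: "1 \<le> p" "p \<le> m + n" "p \<noteq> i" "p \<noteq> j" using pick_p[OF mn] by blast
  obtain c1 c2 where d: "Br (Gen i j a) (Gen j i b) \<approx>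
     Add (Br (Gen i p a) (Gen p i b)) (Smul c1 (Smul c2 (Br (Gen p j 1) (Gen j p (b*a)))))"
    using Hdec[OF v(1) p] by blast
  have vip: "valid_idx m n i p" and vpj: "valid_idx m n p j"
    using v p unfolding valid_idx_def by auto
  show ?thesis
    apply (rule good_brL_cong[OF d])
    apply (intro good_brL_add good_brL_smul)
    using HG_easy[OF vip v(2)] HG_easy[OF vpj v(2)] True p by auto
qed

lemma GH_easy:
  assumes v: "valid_idx m n i j" "valid_idx m n k l" and ne: "\<not> (k = i \<and> l = j)" "\<not> (k = j \<and> l = i)"
  shows "good (Br (Gen k l c) (Br (Gen i j a) (Gen j i b)))"
proof -
  have vs: "valid_idx m n j i" using valid_sym v by blast
  note L = stl_eq.leibniz[where a="Gen k l c" and b="Gen i j a" and c="Gen j i b" and m=m and n=n and smult=smult, simplified]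
  show ?thesis
    apply (rule good_cong[OF vec1[OF L]])
    using v vs ne by (intro good_add good_smul good0_br_gen_r good0_br_gen_l GG0) auto
qed

lemma GH:
  assumes mn: "m + n \<ge> 3" and v: "valid_idx m n i j" "valid_idx m n k l"
  shows "good (Br (Gen k l c) (Br (Gen i j a) (Gen j i b)))"
proof (cases "(k = i \<and> l = j) \<or> (k = j \<and> l = i)")
  case False
  then show ?thesis using GH_easy v by blast
next
  case True
  obtain p where p: "1 \<le> p" "p \<le> m + n" "p \<noteq> i" "p \<noteq> j" using pick_p[OF mn] by blast
  obtain c1 c2 where d: "Br (Gen i j a) (Gen j i b) \<approx>
     Add (Br (Gen i p a) (Gen p i b)) (Smul c1 (Smul c2 (Br (Gen p j 1) (Gen j p (b*a)))))"
    using Hdec[OF v(1) p] by blast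
  have vip: "valid_idx m n i p" and vpj: "valid_idx m n p j"
    using v p unfolding valid_idx_def by auto
  show ?thesis
    apply (rule good_brR_cong[OF d])
    apply (intro good_brR_add good_brR_smul)
    using GH_easy[OF vip v(2)] GH_easy[OF vpj v(2)] True p by auto
qed

lemma B:
  assumes mn: "m + n \<ge> 3" and v: "valid_idx m n k l" and y: "good y"
  shows "good (Br (Gen k l c) y)"
proof -
  obtain w where w: "w \<in> NF m n" "y \<approx> w" using y unfolding good_def by blast
  have "good (Br (Gen k l c) w)"
    using w(1) by (rule br_right_NF) (auto intro: GG[OF v] GH[OF mn _ v])
  then show ?thesis using good_brR_cong w(2) by blast
qed

lemma HH:
  assumes mn: "m + n \<ge> 3" and v: "valid_idx m n i j" "valid_idx m n k l"
  shows "good (Br (Br (Gen i j a) (Gen j i b)) (Br (Gen k l c) (Gen l k d)))"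
proof -
  have vs: "valid_idx m n j i" using valid_sym v by blast
  note L = stl_eq.leibniz[where a="Gen i j a" and b="Gen j i b" and c="Br (Gen k l c) (Gen l k d)" and m=m and n=n and smult=smult, simplified]
  show ?thesis
    apply (rule good_cong[OF L])
    using v vs mn by (intro good_add good_smul B GH) auto
qed

lemma BR:
  assumes mn: "m + n \<ge> 3" and x: "good x" and y: "good y"
  shows "good (Br x y)"
proof -
  obtain w where w: "w \<in> NF m n" "x \<approx> w" using x unfolding good_def by blast
  obtain u where u: "u \<in> NF m n" "y \<approx> u" using y unfolding good_def by blast
  have "good (Br w u)"
    using w(1) 
  proof (rule br_left_NF)
    show "good (Br (Gen i j a) u)" if "valid_idx m n i j" for i j a
      using B[OF mn that good_NF[OF u(1)]] .
    show "good (Br (Br (Gen i j a) (Gen j i b)) u)" if "valid_idx m n i j" for i j a b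
      using u(1) by (rule br_right_NF) (auto intro: HG[OF mn that] HH[OF mn that])
  qed
  then show ?thesis using good_brR_cong good_brL_cong w(2) u(2) by blast
qed

lemma all_good:
  assumes mn: "m + n \<ge> 3"
  shows "wf_term m n x \<Longrightarrow> good x"
  by (induction x) (auto intro: good_add good_smul good_zero BR[OF mn] good_NF NF.intros)

end



fun gpart :: "('k, 'a) lterm \<Rightarrow> ('k, 'a) lterm" where
  "gpart (Gen i j a) = Gen i j a"
| "gpart (Add x y) = Add (gpart x) (gpart y)"
| "gpart (Smul c x) = Smul c (gpart x)"
| "gpart _ = Zero"

fun hpart :: "('k, 'a) lterm \<Rightarrow> ('k, 'a) lterm" where
  "hpart (Br x y) = Br x y"
| "hpart (Add x y) = Add (hpart x) (hpart y)"
| "hpart (Smul c x) = Smul c (hpart x)"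
| "hpart _ = Zero"

fun ST :: "(nat \<times> nat) list \<Rightarrow> (nat \<Rightarrow> nat \<Rightarrow> 'a) \<Rightarrow> ('k, 'a) lterm" where
  "ST [] f = Zero"
| "ST ((i,j) # ps) f = Add (Gen i j (f i j)) (ST ps f)"

context
  fixes m n :: nat and smult :: "'k::field \<Rightarrow> 'a::ring_1 \<Rightarrow> 'a"
begin

lemma swap4: "E m n smult (Add (Add a b) (Add c d)) (Add (Add a c) (Add b d))"
proof -
  have "E m n smult (Add (Add a b) (Add c d)) (Add a (Add b (Add c d)))" by (rule stl_eq.add_assoc)
  also have "E m n smult \<dots> (Add a (Add (Add b c) d))"
    by (intro stl_eq.cong_add stl_eq.refl stl_eq.sym[OF stl_eq.add_assoc])
  also have "E m n smult \<dots> (Add a (Add (Add c b) d))"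
    by (intro stl_eq.cong_add stl_eq.refl stl_eq.add_comm)
  also have "E m n smult \<dots> (Add a (Add c (Add b d)))"
    by (intro stl_eq.cong_add stl_eq.refl stl_eq.add_assoc)
  also have "E m n smult \<dots> (Add (Add a c) (Add b d))"
    by (rule stl_eq.sym[OF stl_eq.add_assoc])
  finally show ?thesis .
qed

lemma zero_add: "E m n smult (Add Zero x) x"
  by (rule stl_eq.trans[OF stl_eq.add_comm stl_eq.add_zero])

lemma split_NF:
  "y \<in> NF m n \<Longrightarrow> E m n smult y (Add (gpart y) (hpart y)) \<and> gpart y \<in> NF0 m n
     \<and> hpart y \<in> Hspan m n \<and> wf_term m n (hpart y)"
proof (induction rule: NF.induct)
  case (nf_gen i j a) then show ?case
    by (auto intro: stl_eq.sym[OF stl_eq.add_zero] NF0.intros Hspan.intros)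
next
  case (nf_h i j a b) then show ?case
    by (auto intro: stl_eq.sym[OF zero_add] NF0.intros Hspan.intros simp: valid_sym)
next
  case nf_zero then show ?case
    by (auto intro: stl_eq.sym[OF stl_eq.add_zero] NF0.intros Hspan.intros)
next
  case (nf_add x y) then show ?case
    by (auto intro: stl_eq.trans[OF stl_eq.cong_add swap4] NF0.intros Hspan.intros)
next
  case (nf_smul x c) then show ?case
    by (auto intro: stl_eq.trans[OF stl_eq.cong_smul stl_eq.smul_add] NF0.intros Hspan.intros)
qed

lemma gen0: "valid_idx m n i j \<Longrightarrow> E m n smult (Gen i j 0) Zero"
proof -
  assume v: "valid_idx m n i j"
  let ?G = "Gen i j 0 :: ('k,'a) lterm"
  have GG: "E m n smult ?G (Add ?G ?G)" using stl_eq.rel1_add[OF v, where a=0 and b=0 and smult=smult] by simp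
  have "E m n smult Zero (Add ?G (Smul (-1) ?G))" by (rule stl_eq.sym[OF stl_eq.add_neg])
  also have "E m n smult \<dots> (Add (Add ?G ?G) (Smul (-1) ?G))" by (intro stl_eq.cong_add stl_eq.refl GG)
  also have "E m n smult \<dots> (Add ?G (Add ?G (Smul (-1) ?G)))" by (rule stl_eq.add_assoc)
  also have "E m n smult \<dots> (Add ?G Zero)" by (intro stl_eq.cong_add stl_eq.refl stl_eq.add_neg)
  also have "E m n smult \<dots> ?G" by (rule stl_eq.add_zero)
  finally show ?thesis by (rule stl_eq.sym)
qed

lemma smul_Zero: "E m n smult (Smul c Zero) Zero"
proof -
  have "E m n smult (Smul c Zero) (Smul c (Smul 0 Zero))" by (intro stl_eq.cong_smul stl_eq.sym[OF smul0])
  also have "E m n smult \<dots> (Smul (c*0) Zero)" by (rule stl_eq.smul_smul)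
  also have "E m n smult \<dots> Zero" using smul0 by simp
  finally show ?thesis .
qed

lemma ST_zero: "(\<forall>(i,j)\<in>set ps. valid_idx m n i j \<and> f i j = 0) \<Longrightarrow> E m n smult (ST ps f) Zero"
proof (induction ps)
  case Nil then show ?case by (simp add: stl_eq.refl)
next
  case (Cons p ps)
  obtain i j where p: "p = (i,j)" by fastforce
  have "E m n smult (ST (p#ps) f) (Add Zero Zero)" using Cons p
    by (auto intro: stl_eq.cong_add gen0)
  then show ?case by (rule stl_eq.trans[OF _ stl_eq.add_zero])
qed

lemma ST_add: "(\<forall>(i,j)\<in>set ps. valid_idx m n i j) \<Longrightarrow>
   E m n smult (ST ps (\<lambda>p q. f p q + g p q)) (Add (ST ps f) (ST ps g))"
proof (induction ps)
  case Nil then show ?case by (simp add: stl_eq.sym[OF stl_eq.add_zero])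
next
  case (Cons p ps)
  obtain i j where p: "p = (i,j)" by fastforce
  then show ?case using Cons
    by (auto intro: stl_eq.trans[OF stl_eq.cong_add swap4] stl_eq.rel1_add)
qed

lemma ST_smul: "(\<forall>(i,j)\<in>set ps. valid_idx m n i j) \<Longrightarrow>
   E m n smult (ST ps (\<lambda>p q. smult c (f p q))) (Smul c (ST ps f))"
proof (induction ps)
  case Nil then show ?case by (simp add: stl_eq.sym[OF smul_Zero])
next
  case (Cons p ps)
  obtain i j where p: "p = (i,j)" by fastforce
  then show ?case using Cons
    by (auto intro: stl_eq.trans[OF stl_eq.cong_add stl_eq.sym[OF stl_eq.smul_add]] stl_eq.rel1_smul)
qed

lemma ST_gen: "distinct ps \<Longrightarrow> (\<forall>(i,j)\<in>set ps. valid_idx m n i j) \<Longrightarrow> (k,l) \<in> set ps \<Longrightarrow>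
   E m n smult (ST ps (unit_mat k l a)) (Gen k l a)"
proof (induction ps)
  case Nil then show ?case by simp
next
  case (Cons p ps)
  obtain i j where p: "p = (i,j)" by fastforce
  show ?case
  proof (cases "p = (k,l)")
    case True
    then have "(k,l) \<notin> set ps" using Cons by auto
    then have "E m n smult (ST ps (unit_mat k l a)) Zero"
      using Cons by (intro ST_zero) (auto simp: unit_mat_def)
    then have "E m n smult (ST (p#ps) (unit_mat k l a)) (Add (Gen k l a) Zero)"
      using True by (auto intro: stl_eq.cong_add stl_eq.refl simp: unit_mat_def)
    then show ?thesis by (rule stl_eq.trans[OF _ stl_eq.add_zero])
  next
    case False
    then have "E m n smult (ST (p#ps) (unit_mat k l a)) (Add Zero (Gen k l a))"
      using Cons p by (auto intro!: stl_eq.cong_add gen0 simp: unit_mat_def)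
    then show ?thesis by (rule stl_eq.trans[OF _ zero_add])
  qed
qed

lemma NF0_ST:
  assumes ps: "distinct ps" "\<forall>(i,j)\<in>set ps. valid_idx m n i j" "\<And>i j. valid_idx m n i j \<Longrightarrow> (i,j) \<in> set ps"
  shows "g \<in> NF0 m n \<Longrightarrow> E m n smult g (ST ps (psi m n smult g))"
proof (induction rule: NF0.induct)
  case (nf0_gen i j a) then show ?case using ST_gen[OF ps(1,2) ps(3)] by (auto intro: stl_eq.sym)
next
  case nf0_zero then show ?case using ST_zero[of ps "\<lambda>p q. 0"] ps(2) by (auto intro: stl_eq.sym)
next
  case (nf0_add x y)
  have "E m n smult (Add x y) (Add (ST ps (psi m n smult x)) (ST ps (psi m n smult y)))"
    by (rule stl_eq.cong_add[OF nf0_add.IH])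
  then show ?case unfolding psi.simps
    by (rule stl_eq.trans[OF _ stl_eq.sym[OF ST_add[OF ps(2), where f="psi m n smult x" and g="psi m n smult y"]]])
next
  case (nf0_smul x c)
  have "E m n smult (Smul c x) (Smul c (ST ps (psi m n smult x)))"
    by (rule stl_eq.cong_smul[OF nf0_smul.IH])
  then show ?case unfolding psi.simps
    by (rule stl_eq.trans[OF _ stl_eq.sym[OF ST_smul[OF ps(2), where f="psi m n smult x" and c=c]]])
qed

end

lemma psi_H_diag:
  assumes alg: "Kalgebra smult"
  shows "h \<in> Hspan m n \<Longrightarrow> p \<noteq> q \<Longrightarrow> psi m n smult h p q = 0"
proof (induction rule: Hspan.induct)
  case (H_gen i j a b) then show ?case by (simp add: unit_sbr, intro conjI impI; simp)
next
  case (H_smul x c) then show ?case using module.scale_zero_right[OF Kalg_module[OF alg]] by simp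
qed auto

theorem lemma3p3:
  fixes m n :: nat
    and smult :: "'k::field \<Rightarrow> 'a::ring_1 \<Rightarrow> 'a"
    and x :: "('k, 'a) lterm"
  assumes charK: "(2::'k) \<noteq> 0" "(3::'k) \<noteq> 0"
    and alg: "Kalgebra smult"
    and mn: "m + n \<ge> 3"
    and wf: "wf_term m n x"
    and ker: "psi m n smult x = (\<lambda>p q. 0)"
  shows "\<exists>h \<in> Hspan m n. wf_term m n h \<and> stl_eq m n smult x h"
proof -
  obtain w where w: "w \<in> NF m n" "stl_eq m n smult x w"
    using all_good[OF mn wf, of smult] unfolding good_def by blast
  have pw: "psi m n smult w = (\<lambda>p q. 0)" using psi_inv[OF alg w(2)] ker by simp
  let ?g = "gpart w" and ?h = "hpart w"
  have sp: "stl_eq m n smult w (Add ?g ?h)" "?g \<in> NF0 m n" "?h \<in> Hspan m n" "wf_term m n ?h"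
    using split_NF[OF w(1)] by auto
  have "psi m n smult (Add ?g ?h) = (\<lambda>p q. 0)" using psi_inv[OF alg sp(1)] pw by simp
  then have eq: "\<And>p q. psi m n smult ?g p q + psi m n smult ?h p q = 0"
    by (simp add: fun_eq_iff)
  have pg: "\<And>p q. p \<noteq> q \<Longrightarrow> psi m n smult ?g p q = 0"
  proof -
    fix p q :: nat assume "p \<noteq> q"
    then have "psi m n smult ?h p q = 0" by (rule psi_H_diag[OF alg sp(3)])
    then show "psi m n smult ?g p q = 0" using eq[of p q] by simp
  qed
  define ps where "ps = filter (\<lambda>(i,j). i \<noteq> j) (List.product [1..<m+n+1] [1..<m+n+1])"
  have ps1: "distinct ps" unfolding ps_def by (simp add: distinct_product)
  have ps2: "\<forall>(i,j)\<in>set ps. valid_idx m n i j" unfolding ps_def valid_idx_def by auto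
  have ps3: "\<And>i j. valid_idx m n i j \<Longrightarrow> (i,j) \<in> set ps" unfolding ps_def valid_idx_def by auto
  have "stl_eq m n smult ?g (ST ps (psi m n smult ?g))" by (rule NF0_ST[OF ps1 ps2 ps3 sp(2)])
  also have "stl_eq m n smult \<dots> Zero"
    using ps2 pg by (intro ST_zero) (auto simp: valid_idx_def)
  finally have g0: "stl_eq m n smult ?g Zero" .
  have "stl_eq m n smult x (Add ?g ?h)" using w(2) sp(1) by (rule stl_eq.trans)
  also have "stl_eq m n smult \<dots> (Add Zero ?h)" by (intro stl_eq.cong_add g0 stl_eq.refl)
  also have "stl_eq m n smult \<dots> ?h" by (rule zero_add)
  finally show ?thesis using sp(3,4) by blast
qed

end
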